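(* Let $F,G:\mathbb{F}_{2^n}\to\mathbb{F}_{2^n}$ be CCZ-equivalent via the affine permutation $\mathcal{A}(u)=\begin{pmatrix}\mathcal{A}_{11}&\mathcal{A}_{12}\\ \mathcal{A}_{21}&\mathcal{A}_{22}\end{pmatrix}u+\begin{pmatrix}C\\ D\end{pmatrix}$ of $\mathbb{F}_{2^n}\times\mathbb{F}_{2^n}$, i.e. $\{(x,G(x)):x\in\mathbb{F}_{2^n}\}=\{\mathcal{A}(x,F(x)):x\in\mathbb{F}_{2^n}\}$. Then for all $a,b,c,d\in\mathbb{F}_{2^n}$, $$\mathrm{EBCT}_F(a,b,c,d)=\mathrm{EBCT}_G(\alpha,\beta,\gamma,\delta),$$ where $\alpha=\mathcal{A}_{12}b+\mathcal{A}_{11}a$, $\beta=\mathcal{A}_{22}b+\mathcal{A}_{21}a$, $\gamma=\mathcal{A}_{12}d+\mathcal{A}_{11}c$, $\delta=\mathcal{A}_{22}d+\mathcal{A}_{21}c$. Since the map $(a,b,c,d)\mapsto(\alpha,\beta,\gamma,\delta)$ is a bijection of $\mathbb{F}_{2^n}^4$, the multiset of EBCT entries (the EBCT spectrum) is preserved under CCZ-equivalence.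
   Context: Elements of $\mathbb{F}_{2^n}$ are identified with vectors of $\mathbb{F}_2^n$; $\mathcal{A}_{ij}:\mathbb{F}_{2^n}\to\mathbb{F}_{2^n}$ are $\mathbb{F}_2$-linear maps, $C,D\in\mathbb{F}_{2^n}$, and $\mathcal{A}$ is a bijection of $\mathbb{F}_{2^n}\times\mathbb{F}_{2^n}$. For any function $H:\mathbb{F}_{2^n}\to\mathbb{F}_{2^n}$ (not necessarily a permutation), $$\mathrm{EBCT}_H(a,b,c,d)=\left|\left\{X\in\mathbb{F}_{2^n} : H(X)+H(X+a)=b,\ H(X)+H(X+c)=d,\ H(X+a+c)+H(X+a)=d\right\}\right|.$$ *)

theory Defs
  imports Main "HOL-Library.Multiset" "HOL-Library.Cardinality"
begin

definition EBCT :: "('a::ab_group_add \<Rightarrow> 'a) \<Rightarrow> 'a \<Rightarrow> 'a \<Rightarrow> 'a \<Rightarrow> 'a \<Rightarrow> nat" where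
  "EBCT H a b c d = card {X. H X + H (X + a) = b \<and> H X + H (X + c) = d
                            \<and> H (X + a + c) + H (X + a) = d}"

text \<open>F_2-linearity on a group of characteristic 2 (scalars are only 0 and 1),
  i.e. additivity.\<close>
definition F2_linear :: "('a::ab_group_add \<Rightarrow> 'a) \<Rightarrow> bool" where
  "F2_linear L \<longleftrightarrow> (\<forall>x y. L (x + y) = L x + L y)"

definition affine_map2 ::
  "('a::ab_group_add \<Rightarrow> 'a) \<Rightarrow> ('a \<Rightarrow> 'a) \<Rightarrow> ('a \<Rightarrow> 'a) \<Rightarrow> ('a \<Rightarrow> 'a) \<Rightarrow> 'a \<Rightarrow> 'a
   \<Rightarrow> 'a \<times> 'a \<Rightarrow> 'a \<times> 'a" where
  "affine_map2 A11 A12 A21 A22 C D u =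
     (A11 (fst u) + A12 (snd u) + C, A21 (fst u) + A22 (snd u) + D)"

end

theory Submission
  imports Defs "HOL-Number_Theory.Number_Theory"
begin

lemma char2:
  assumes "CARD('a::{finite,field}) = 2 ^ n"
  shows "(x::'a) + x = 0"
proof -
  have "CHAR('a) dvd 2 ^ n" using CHAR_dvd_CARD[where 'a='a] assms by simp
  moreover have "prime CHAR('a)"
    by (rule prime_CHAR_semidom) (simp add: finite_imp_CHAR_pos)
  ultimately have "CHAR('a) dvd 2" using prime_dvd_power by blast
  hence "CHAR('a) = 2" using \<open>prime CHAR('a)\<close>
    by (simp add: primes_dvd_imp_eq)
  hence "- x = x" by (rule uminus_CHAR_2)
  thus ?thesis by (metis add.right_inverse)
qed

lemma surj_Collect:
  assumes s: "surj f" shows "{y. P y} = f ` {x. P (f x)}"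
proof (intro equalityI subsetI)
  fix y assume "y \<in> {y. P y}"
  moreover obtain x where "y = f x" using s by (metis surjD)
  ultimately show "y \<in> f ` {x. P (f x)}" by auto
qed auto

lemma triple:
  fixes p q b r d s :: "'a::ab_group_add"
  assumes c2: "\<And>x::'a. x + x = 0"
  shows "(p + q = b \<and> p + r = d \<and> s + q = d) \<longleftrightarrow> (q = p + b \<and> r = p + d \<and> s = p + (b + d))"
proof -
  have sw: "\<And>x y z::'a. (x + y = z) = (y = x + z)"
    by (metis add.assoc add.left_neutral c2)
  have "(p + q = b) = (q = p + b)" by (rule sw)
  moreover have "(p + r = d) = (r = p + d)" by (rule sw)
  moreover have "(s + q = d) = (s = q + d)" by (metis sw add.commute)
  ultimately show ?thesis by (auto simp: add.assoc)
qed

theorem mainTheorem3: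
  fixes F G :: "'a::{finite, field} \<Rightarrow> 'a"
    and A11 A12 A21 A22 :: "'a \<Rightarrow> 'a"
    and C D :: 'a
    and n :: nat
  assumes card: "CARD('a) = 2 ^ n"
    and lin: "F2_linear A11" "F2_linear A12" "F2_linear A21" "F2_linear A22"
    and bij: "bij (affine_map2 A11 A12 A21 A22 C D)"
    and ccz: "{(x, G x) | x. True} = {affine_map2 A11 A12 A21 A22 C D (x, F x) | x. True}"
  shows "(\<forall>a b c d. EBCT F a b c d =
            EBCT G (A12 b + A11 a) (A22 b + A21 a) (A12 d + A11 c) (A22 d + A21 c))
       \<and> bij (\<lambda>(a, b, c, d). (A12 b + A11 a, A22 b + A21 a, A12 d + A11 c, A22 d + A21 c))
       \<and> image_mset (\<lambda>(a, b, c, d). EBCT F a b c d) (mset_set UNIV)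
         = image_mset (\<lambda>(a, b, c, d). EBCT G a b c d) (mset_set UNIV)"
proof -
  let ?A = "affine_map2 A11 A12 A21 A22 C D"
  have c2: "\<And>x::'a. x + x = 0" using char2[OF card] .
  have eqiff: "\<And>x y::'a. (x + y = z) = (y = x + z)" for z
    by (metis add.assoc add.left_neutral c2)
  have l11: "\<And>x y. A11 (x + y) = A11 x + A11 y" using lin(1) unfolding F2_linear_def by blast
  have l12: "\<And>x y. A12 (x + y) = A12 x + A12 y" using lin(2) unfolding F2_linear_def by blast
  have l21: "\<And>x y. A21 (x + y) = A21 x + A21 y" using lin(3) unfolding F2_linear_def by blast
  have l22: "\<And>x y. A22 (x + y) = A22 x + A22 y" using lin(4) unfolding F2_linear_def by blast
  have z11: "A11 0 = 0" using l11[of 0 0] by (metis add.right_neutral add_left_cancel)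
  have z12: "A12 0 = 0" using l12[of 0 0] by (metis add.right_neutral add_left_cancel)
  have z21: "A21 0 = 0" using l21[of 0 0] by (metis add.right_neutral add_left_cancel)
  have z22: "A22 0 = 0" using l22[of 0 0] by (metis add.right_neutral add_left_cancel)
  have injA: "inj ?A" using bij bij_is_inj by blast
  define \<sigma> where "\<sigma> x = A11 x + A12 (F x) + C" for x
  define \<tau> where "\<tau> x = A21 x + A22 (F x) + D" for x
  define M1 where "M1 u v = A12 v + A11 u" for u v
  define M2 where "M2 u v = A22 v + A21 u" for u v
  have Aexp: "?A (X + u, F X + v) = (\<sigma> X + M1 u v, \<tau> X + M2 u v)" for X u v
    unfolding affine_map2_def \<sigma>_def \<tau>_def M1_def M2_def by (simp add: l11 l12 l21 l22 add_ac)
  have Agr: "?A (x, F x) = (\<sigma> x, \<tau> x)" for x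
    unfolding affine_map2_def \<sigma>_def \<tau>_def by simp
  have Gs: "G (\<sigma> x) = \<tau> x" for x
  proof -
    have "?A (x, F x) \<in> {(x, G x) | x. True}" using ccz by blast
    thus ?thesis by (auto simp: Agr)
  qed
  have surjs: "surj \<sigma>"
  proof -
    have "\<exists>x. y = \<sigma> x" for y
    proof -
      have "(y, G y) \<in> {?A (x, F x) | x. True}" using ccz by blast
      then obtain x where "?A (x, F x) = (y, G y)" by (smt (verit) mem_Collect_eq)
      hence "y = \<sigma> x" by (simp add: Agr)
      thus ?thesis by blast
    qed
    thus ?thesis by blast
  qed
  hence injs: "inj \<sigma>" using finite_UNIV_surj_inj by (simp add: finite_UNIV_surj_inj)
  have key: "F (X + u) = F X + v \<longleftrightarrow> G (\<sigma> X + M1 u v) = \<tau> X + M2 u v" for X u v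
  proof
    assume "F (X + u) = F X + v"
    hence "?A (X + u, F X + v) = ?A (X+u, F (X+u))" by simp
    thus "G (\<sigma> X + M1 u v) = \<tau> X + M2 u v" by (simp add: Aexp Agr Gs)
  next
    assume h: "G (\<sigma> X + M1 u v) = \<tau> X + M2 u v"
    have "(\<sigma> X + M1 u v, G (\<sigma> X + M1 u v)) \<in> {?A (x, F x) | x. True}" using ccz by blast
    then obtain x where "?A (x, F x) = ?A (X + u, F X + v)" using h by (auto simp: Aexp)
    hence "(x, F x) = (X + u, F X + v)" using injA by (meson injD)
    thus "F (X + u) = F X + v" by auto
  qed
  have M1add: "M1 (a + c) (b + d) = M1 a b + M1 c d" for a b c d
    unfolding M1_def by (simp add: l11 l12 add_ac)
  have M2add: "M2 (a + c) (b + d) = M2 a b + M2 c d" for a b c d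
    unfolding M2_def by (simp add: l21 l22 add_ac)
  have part1: "EBCT F a b c d = EBCT G (M1 a b) (M2 a b) (M1 c d) (M2 c d)" for a b c d
  proof -
    let ?SF = "{X. F X + F (X + a) = b \<and> F X + F (X + c) = d \<and> F (X + a + c) + F (X + a) = d}"
    let ?P = "\<lambda>Y. G Y + G (Y + M1 a b) = M2 a b \<and> G Y + G (Y + M1 c d) = M2 c d
                 \<and> G (Y + M1 a b + M1 c d) + G (Y + M1 a b) = M2 c d"
    have e1: "X \<in> ?SF \<longleftrightarrow> F (X + a) = F X + b \<and> F (X + c) = F X + d \<and> F (X + (a + c)) = F X + (b + d)" for X
      using triple[OF c2, of "F X" "F (X + a)" b "F (X + c)" d "F (X + a + c)"]
      by (simp add: add.assoc)
    have e2: "?P (\<sigma> X) \<longleftrightarrow> G (\<sigma> X + M1 a b) = \<tau> X + M2 a b \<and> G (\<sigma> X + M1 c d) = \<tau> X + M2 c d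
          \<and> G (\<sigma> X + M1 (a+c) (b+d)) = \<tau> X + M2 (a+c) (b+d)" for X
      using triple[OF c2, of "G (\<sigma> X)" "G (\<sigma> X + M1 a b)" "M2 a b" "G (\<sigma> X + M1 c d)" "M2 c d"
          "G (\<sigma> X + M1 a b + M1 c d)"]
      by (simp add: Gs M1add M2add add.assoc)
    have "?SF = {X. ?P (\<sigma> X)}" using e1 e2 key by blast
    moreover have "{Y. ?P Y} = \<sigma> ` {X. ?P (\<sigma> X)}" by (rule surj_Collect[OF surjs])
    ultimately have "{Y. ?P Y} = \<sigma> ` ?SF" by simp
    hence "card {Y. ?P Y} = card ?SF" using injs by (simp add: card_image inj_on_subset)
    thus ?thesis unfolding EBCT_def by simp
  qed
  define \<phi> where "\<phi> = (\<lambda>(a, b, c, d). (A12 b + A11 a, A22 b + A21 a, A12 d + A11 c, A22 d + A21 c))"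
  have injM: "M1 a b = M1 a' b' \<Longrightarrow> M2 a b = M2 a' b' \<Longrightarrow> a = a' \<and> b = b'" for a b a' b'
  proof -
    assume h: "M1 a b = M1 a' b'" "M2 a b = M2 a' b'"
    have "M1 (a + a') (b + b') = 0" "M2 (a + a') (b + b') = 0"
      using h by (simp_all add: M1add M2add c2)
    hence "?A (a + a', b + b') = ?A (0, 0)"
      unfolding affine_map2_def M1_def M2_def by (simp add: z11 z12 z21 z22 add_ac)
    hence "a + a' = 0 \<and> b + b' = 0" using injA by (meson injD prod.inject)
    thus ?thesis by (metis eqiff add_0_right)
  qed
  have "inj \<phi>"
  proof (rule injI)
    fix p q :: "'a \<times> 'a \<times> 'a \<times> 'a"
    assume h: "\<phi> p = \<phi> q"
    obtain a b c d where p: "p = (a, b, c, d)" by (cases p) auto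
    obtain a' b' c' d' where q: "q = (a', b', c', d')" by (cases q) auto
    have "M1 a b = M1 a' b'" "M2 a b = M2 a' b'" "M1 c d = M1 c' d'" "M2 c d = M2 c' d'"
      using h unfolding p q \<phi>_def M1_def M2_def by simp_all
    thus "p = q" using injM p q by metis
  qed
  hence bphi: "bij \<phi>" by (simp add: finite_UNIV_inj_surj bij_def)
  have "image_mset (\<lambda>(a, b, c, d). EBCT F a b c d) (mset_set UNIV)
      = image_mset ((\<lambda>(a, b, c, d). EBCT G a b c d) \<circ> \<phi>) (mset_set UNIV)"
    by (rule image_mset_cong) (auto simp: \<phi>_def part1 M1_def M2_def)
  also have "\<dots> = image_mset (\<lambda>(a, b, c, d). EBCT G a b c d) (image_mset \<phi> (mset_set UNIV))"
    by (simp add: image_mset.compositionality)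
  also have "image_mset \<phi> (mset_set UNIV) = mset_set UNIV"
    using bphi by (simp add: image_mset_mset_set bij_is_inj bij_is_surj)
  finally have m: "image_mset (\<lambda>(a, b, c, d). EBCT F a b c d) (mset_set UNIV)
         = image_mset (\<lambda>(a, b, c, d). EBCT G a b c d) (mset_set UNIV)" .
  have p1: "\<forall>a b c d. EBCT F a b c d =
            EBCT G (A12 b + A11 a) (A22 b + A21 a) (A12 d + A11 c) (A22 d + A21 c)"
    using part1 unfolding M1_def M2_def by blast
  show ?thesis
    apply (intro conjI)
      apply (rule p1)
     apply (rule bphi[unfolded \<phi>_def])
    apply (rule m)
    done
qed

end
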